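(* For integers $m\ge1$ and $k\ge1$, $$\sum_{i=0}^{k}\mu(P|_m,i,J^{*})\binom{m-2i}{2k-2i}\equiv\mu(P|_m,k,L)\pmod 2.$$
   Context: Let $N=\{0,1,2,\ldots\}$, $J^{*}=\{(2n+1)2^{2k}-1 : n,k\in N,\ k>0\}$, $L=N\setminus J^{*}$, and $P=\{k\in N: k\equiv0,3\pmod 4\}$. For an infinite set $A\subseteq N$, $A|_m$ denotes the set of the $m$ smallest elements of $A$. An involution on a finite set $A$ is a permutation $\sigma$ of $A$ with $\sigma=\sigma^{-1}$; its cycles are fixed points and transpositions $(c,d)$. A transposition $(c,d)$ is said to be in a set $B$ if $c+d\in B$. For a finite set $A\subseteq N$, an integer $k\ge0$ and a set $B\subseteq N$, $\mu(A,k,B)$ denotes the number of involutions of $A$ having exactly $k$ transpositions, all of which are in $B$. Binomial coefficients $\binom{a}{b}$ with $b>a$ or $b<0$ are $0$. *)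

theory Defs
  imports Main "HOL-Library.Infinite_Set" "HOL-Combinatorics.Permutations"
begin

definition Jstar :: "nat set" where
  "Jstar = {(2*n+1) * 2^(2*k) - 1 | n k. k > 0}"

definition Lset :: "nat set" where
  "Lset = UNIV - Jstar"

definition Pset :: "nat set" where
  "Pset = {k. k mod 4 = 0 \<or> k mod 4 = 3}"

text \<open>The set of the m smallest elements of an infinite set A.\<close>
definition restr :: "nat set \<Rightarrow> nat \<Rightarrow> nat set" where
  "restr A m = enumerate A ` {..<m}"

definition involution_on :: "nat set \<Rightarrow> (nat \<Rightarrow> nat) \<Rightarrow> bool" where
  "involution_on A \<sigma> \<longleftrightarrow> \<sigma> permutes A \<and> \<sigma> \<circ> \<sigma> = id"

definition transps :: "nat set \<Rightarrow> (nat \<Rightarrow> nat) \<Rightarrow> nat set set" where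
  "transps A \<sigma> = {{c, \<sigma> c} | c. c \<in> A \<and> \<sigma> c \<noteq> c}"

definition mu :: "nat set \<Rightarrow> nat \<Rightarrow> nat set \<Rightarrow> nat" where
  "mu A k B = card {\<sigma>. involution_on A \<sigma> \<and> card (transps A \<sigma>) = k
      \<and> (\<forall>c\<in>A. \<sigma> c \<noteq> c \<longrightarrow> c + \<sigma> c \<in> B)}"

definition binom_int :: "int \<Rightarrow> nat \<Rightarrow> nat" where
  "binom_int a b = (if a < 0 then 0 else nat a choose b)"

end

theory Submission
  imports Defs
begin

definition edges :: "nat set \<Rightarrow> nat set set" where
  "edges A = {e. e \<subseteq> A \<and> card e = 2}"

definition matchings :: "nat set \<Rightarrow> nat set set set" where
  "matchings A = {M. M \<subseteq> edges A \<and> (\<forall>e\<in>M. \<forall>f\<in>M. e \<noteq> f \<longrightarrow> e \<inter> f = {})}"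

definition NM :: "nat set \<Rightarrow> nat \<Rightarrow> nat" where
  "NM A j = card {M \<in> matchings A. card M = j}"

definition muM :: "nat set \<Rightarrow> nat \<Rightarrow> nat set \<Rightarrow> nat" where
  "muM A k B = card {M \<in> matchings A. card M = k \<and> (\<forall>e\<in>M. \<Sum>e \<in> B)}"

lemma finite_matchings: "finite A \<Longrightarrow> finite (matchings A)"
proof -
  assume "finite A"
  have "matchings A \<subseteq> Pow (Pow A)" by (auto simp: matchings_def edges_def)
  then show ?thesis using \<open>finite A\<close> by (meson finite_Pow_iff finite_subset)
qed

lemma matching_finite: "finite A \<Longrightarrow> M \<in> matchings A \<Longrightarrow> finite M"
proof -
  assume "finite A" "M \<in> matchings A"
  have "M \<subseteq> Pow A" using \<open>M \<in> matchings A\<close> by (auto simp: matchings_def edges_def)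
  then show ?thesis using \<open>finite A\<close> by (meson finite_Pow_iff finite_subset)
qed

lemma inv_facts:
  assumes "involution_on A s"
  shows "\<And>c. c \<in> A \<Longrightarrow> s c \<in> A" "\<And>c. s (s c) = c" "\<And>c. c \<notin> A \<Longrightarrow> s c = c"
proof -
  show "\<And>c. c \<in> A \<Longrightarrow> s c \<in> A" using assms unfolding involution_on_def
    by (meson permutes_in_image)
  show "\<And>c. s (s c) = c" using assms unfolding involution_on_def
    by (metis comp_apply id_apply)
  show "\<And>c. c \<notin> A \<Longrightarrow> s c = c" using assms unfolding involution_on_def
    by (meson permutes_not_in)
qed

lemma transps_matching:
  assumes "involution_on A s"
  shows "transps A s \<in> matchings A"
proof -
  note f = inv_facts[OF assms]
  have "transps A s \<subseteq> edges A"
    unfolding transps_def edges_def using f(1) by auto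
  moreover have "\<forall>e\<in>transps A s. \<forall>g\<in>transps A s. e \<noteq> g \<longrightarrow> e \<inter> g = {}"
    unfolding transps_def using f(2) by auto metis+
  ultimately show ?thesis unfolding matchings_def by blast
qed


lemma transps_inj:
  assumes "involution_on A s" "involution_on A t" "transps A s = transps A t"
  shows "s = t"
proof
  fix x
  note fs = inv_facts[OF assms(1)] and ft = inv_facts[OF assms(2)]
  have key: "\<And>s t. involution_on A s \<Longrightarrow> involution_on A t \<Longrightarrow> transps A s = transps A t
     \<Longrightarrow> s x \<noteq> x \<Longrightarrow> s x = t x"
  proof -
    fix s t assume a: "involution_on A s" "involution_on A t" "transps A s = transps A t" "s x \<noteq> x"
    note fs = inv_facts[OF a(1)] and ft = inv_facts[OF a(2)]
    have "x \<in> A" using a(4) fs(3) by blast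
    then have "{x, s x} \<in> transps A t" using a(3,4) unfolding transps_def by auto
    then obtain c where c: "c \<in> A" "t c \<noteq> c" "{x, s x} = {c, t c}" unfolding transps_def by auto
    then show "s x = t x" using ft(2) a(4) by (auto simp: doubleton_eq_iff)
  qed
  show "s x = t x"
  proof (cases "s x = x")
    case True
    show ?thesis
    proof (cases "t x = x")
      case True then show ?thesis using \<open>s x = x\<close> by simp
    next
      case False then show ?thesis using key[OF assms(2,1) assms(3)[symmetric]] by simp
    qed
  next
    case False then show ?thesis using key[OF assms] by simp
  qed
qed

definition partner :: "nat set set \<Rightarrow> nat \<Rightarrow> nat" where
  "partner M x = (if \<exists>y. {x,y} \<in> M then (THE y. {x,y} \<in> M) else x)"

lemma matching_uniq:
  assumes "M \<in> matchings A" "{x,y} \<in> M" "{x,z} \<in> M" shows "y = z"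
proof -
  have d: "\<forall>e\<in>M. \<forall>f\<in>M. e \<noteq> f \<longrightarrow> e \<inter> f = {}" using assms(1) unfolding matchings_def by simp
  have "{x,y} \<inter> {x,z} \<noteq> {}" by simp
  then have "{x,y} = {x,z}" using d assms(2,3) by metis
  moreover have "card {x,y} = 2" using assms unfolding matchings_def edges_def by blast
  moreover have "x \<noteq> y" using \<open>card {x,y} = 2\<close> by (cases "x = y") auto
  ultimately show ?thesis by (auto simp: doubleton_eq_iff)
qed

lemma partner_eq:
  assumes "M \<in> matchings A" "{x,y} \<in> M" shows "partner M x = y"
proof -
  have "(THE y. {x,y} \<in> M) = y" using matching_uniq[OF assms(1)] assms(2) by (rule_tac the_equality) auto
  then show ?thesis using assms unfolding partner_def by auto
qed

lemma edge_neq: "M \<in> matchings A \<Longrightarrow> {x,y} \<in> M \<Longrightarrow> x \<noteq> y"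
  unfolding matchings_def edges_def by auto

lemma partner_invol:
  assumes "M \<in> matchings A" shows "involution_on A (partner M)" "transps A (partner M) = M"
proof -
  let ?p = "partner M"
  have pp: "?p (?p x) = x" for x
  proof (cases "\<exists>y. {x,y} \<in> M")
    case True
    then obtain y where y: "{x,y} \<in> M" by blast
    then have "{y,x} \<in> M" by (simp add: insert_commute)
    then show ?thesis using partner_eq[OF assms y] partner_eq[OF assms] by simp
  next
    case False then show ?thesis unfolding partner_def by simp
  qed
  have nA: "?p x = x" if "x \<notin> A" for x
  proof -
    have "\<not> (\<exists>y. {x,y} \<in> M)" using that assms unfolding matchings_def edges_def by blast
    then show ?thesis unfolding partner_def by simp
  qed
  have "?p permutes A" unfolding permutes_def
  proof (intro conjI allI impI)
    fix x assume "x \<notin> A" then show "?p x = x" by (rule nA)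
  next
    fix y show "\<exists>!x. ?p x = y" by (metis pp)
  qed
  moreover have "?p \<circ> ?p = id" using pp by auto
  ultimately show "involution_on A ?p" unfolding involution_on_def by blast
  have moved: "?p c \<noteq> c \<longleftrightarrow> {c, ?p c} \<in> M" for c
  proof (cases "\<exists>y. {c,y} \<in> M")
    case True
    then obtain y where y: "{c,y} \<in> M" by blast
    then show ?thesis using partner_eq[OF assms y] edge_neq[OF assms y] by simp
  next
    case False then show ?thesis unfolding partner_def by (metis insert_absorb2)
  qed
  show "transps A ?p = M"
  proof
    show "transps A ?p \<subseteq> M" unfolding transps_def using moved by auto
  next
    show "M \<subseteq> transps A ?p"
    proof
      fix e assume e: "e \<in> M"
      then have "card e = 2" "e \<subseteq> A" using assms unfolding matchings_def edges_def by auto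
      then obtain x y where xy: "e = {x,y}" "x \<noteq> y" by (meson card_2_iff)
      then have "?p x = y" using partner_eq[OF assms] e by simp
      then show "e \<in> transps A ?p" unfolding transps_def using xy \<open>e \<subseteq> A\<close> by auto
    qed
  qed
qed

lemma transps_bij: "bij_betw (transps A) {s. involution_on A s} (matchings A)"
  unfolding bij_betw_def
proof
  show "inj_on (transps A) {s. involution_on A s}" using transps_inj by (auto simp: inj_on_def)
  show "transps A ` {s. involution_on A s} = matchings A"
  proof
    show "transps A ` {s. involution_on A s} \<subseteq> matchings A" using transps_matching by auto
    show "matchings A \<subseteq> transps A ` {s. involution_on A s}"
      using partner_invol by (metis (mono_tags, lifting) image_eqI mem_Collect_eq subsetI)
  qed
qed

lemma cond_eq:
  assumes "involution_on A s"
  shows "(\<forall>c\<in>A. s c \<noteq> c \<longrightarrow> c + s c \<in> B) \<longleftrightarrow> (\<forall>e\<in>transps A s. \<Sum>e \<in> B)"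
proof -
  have h: "\<Sum>{c, s c} = c + s c" if "s c \<noteq> c" for c using that by simp
  show ?thesis
  proof
    assume L: "\<forall>c\<in>A. s c \<noteq> c \<longrightarrow> c + s c \<in> B"
    show "\<forall>e\<in>transps A s. \<Sum>e \<in> B" unfolding transps_def using h L by auto
  next
    assume R: "\<forall>e\<in>transps A s. \<Sum>e \<in> B"
    show "\<forall>c\<in>A. s c \<noteq> c \<longrightarrow> c + s c \<in> B"
    proof (intro ballI impI)
      fix c assume "c \<in> A" "s c \<noteq> c"
      then have "{c, s c} \<in> transps A s" unfolding transps_def by blast
      then show "c + s c \<in> B" using R h[OF \<open>s c \<noteq> c\<close>] by metis
    qed
  qed
qed

lemma bij_filter: "bij_betw f X Y \<Longrightarrow> bij_betw f {x\<in>X. P (f x)} {y\<in>Y. P y}"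
  unfolding bij_betw_def inj_on_def by (auto simp: image_iff)

lemma mu_muM: "mu A k B = muM A k B"
proof -
  have b: "bij_betw (transps A) {s \<in> {s. involution_on A s}. card (transps A s) = k \<and> (\<forall>e\<in>transps A s. \<Sum>e \<in> B)}
     {M \<in> matchings A. card M = k \<and> (\<forall>e\<in>M. \<Sum>e \<in> B)}"
    using bij_filter[OF transps_bij, where P="\<lambda>M. card M = k \<and> (\<forall>e\<in>M. \<Sum>e \<in> B)"] by simp
  have e: "{s \<in> {s. involution_on A s}. card (transps A s) = k \<and> (\<forall>e\<in>transps A s. \<Sum>e \<in> B)}
     = {s. involution_on A s \<and> card (transps A s) = k \<and> (\<forall>c\<in>A. s c \<noteq> c \<longrightarrow> c + s c \<in> B)}"
  proof (rule set_eqI)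
    fix s show "s \<in> {s \<in> {s. involution_on A s}. card (transps A s) = k \<and> (\<forall>e\<in>transps A s. \<Sum>e \<in> B)}
      \<longleftrightarrow> s \<in> {s. involution_on A s \<and> card (transps A s) = k \<and> (\<forall>c\<in>A. s c \<noteq> c \<longrightarrow> c + s c \<in> B)}"
    proof (cases "involution_on A s")
      case True show ?thesis using cond_eq[OF True, of B] by simp
    next
      case False then show ?thesis by simp
    qed
  qed
  have "card {s \<in> {s. involution_on A s}. card (transps A s) = k \<and> (\<forall>e\<in>transps A s. \<Sum>e \<in> B)}
     = card {M \<in> matchings A. card M = k \<and> (\<forall>e\<in>M. \<Sum>e \<in> B)}" by (rule bij_betw_same_card[OF b])
  then show ?thesis unfolding mu_def muM_def e .
qed


lemma union_card:
  assumes "finite A" "S \<in> matchings A"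
  shows "card (\<Union>S) = 2 * card S" "\<Union>S \<subseteq> A"
proof -
  have "pairwise disjnt S" using assms(2) unfolding matchings_def pairwise_def disjnt_def by blast
  moreover have "\<And>e. e \<in> S \<Longrightarrow> finite e" "\<And>e. e \<in> S \<Longrightarrow> card e = 2"
    using assms unfolding matchings_def edges_def by (auto intro: finite_subset)
  ultimately have "card (\<Union>S) = sum card S" by (simp add: card_Union_disjoint)
  also have "\<dots> = sum (\<lambda>_. 2) S" using \<open>\<And>e. e \<in> S \<Longrightarrow> card e = 2\<close> by (rule sum.cong[OF refl])
  finally show "card (\<Union>S) = 2 * card S" by simp
  show "\<Union>S \<subseteq> A" using assms unfolding matchings_def edges_def by auto
qed

lemma ext_card:
  assumes fin: "finite A" and S: "S \<in> matchings A" and k: "card S \<le> k"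
  shows "card {M \<in> matchings A. card M = k \<and> S \<subseteq> M} = NM (A - \<Union>S) (k - card S)"
proof -
  let ?X = "{R \<in> matchings (A - \<Union>S). card R = k - card S}"
  let ?Y = "{M \<in> matchings A. card M = k \<and> S \<subseteq> M}"
  have finS: "finite S" using matching_finite[OF fin S] .
  have disj: "S \<inter> R = {}" if "R \<in> matchings (A - \<Union>S)" for R
  proof -
    { fix e assume "e \<in> R" "e \<in> S"
      then have "e \<subseteq> A - \<Union>S" "card e = 2" "e \<subseteq> \<Union>S" using that unfolding matchings_def edges_def by auto
      then have False by (metis Diff_disjoint card.empty inf.orderE inf_assoc inf_bot_right zero_neq_numeral) }
    then show ?thesis by blast
  qed
  have un: "S \<union> R \<in> matchings A" if "R \<in> matchings (A - \<Union>S)" for R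
  proof -
    have "S \<union> R \<subseteq> edges A" using S that unfolding matchings_def edges_def by auto
    moreover have "\<forall>e\<in>S \<union> R. \<forall>f\<in>S \<union> R. e \<noteq> f \<longrightarrow> e \<inter> f = {}"
    proof (intro ballI impI)
      fix e f assume ef: "e \<in> S \<union> R" "f \<in> S \<union> R" "e \<noteq> f"
      have RS: "r \<inter> \<Union>S = {}" if "r \<in> R" for r using \<open>R \<in> matchings (A - \<Union>S)\<close> that
        unfolding matchings_def edges_def by auto
      show "e \<inter> f = {}"
      proof (cases "e \<in> S")
        case True
        show ?thesis
        proof (cases "f \<in> S")
          case True then show ?thesis using \<open>e \<in> S\<close> ef(3) S unfolding matchings_def by blast
        next
          case False then have "f \<in> R" using ef by blast
          then show ?thesis using RS[of f] \<open>e \<in> S\<close> by blast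
        qed
      next
        case False then have "e \<in> R" using ef by blast
        show ?thesis
        proof (cases "f \<in> S")
          case True then show ?thesis using RS[of e] \<open>e \<in> R\<close> by blast
        next
          case False then have "f \<in> R" using ef by blast
          then show ?thesis using \<open>e \<in> R\<close> ef(3) that unfolding matchings_def by blast
        qed
      qed
    qed
    ultimately show ?thesis unfolding matchings_def by blast
  qed
  have diff: "M - S \<in> matchings (A - \<Union>S)" if "M \<in> matchings A" "S \<subseteq> M" for M
  proof -
    have "M - S \<subseteq> edges (A - \<Union>S)"
    proof
      fix e assume e: "e \<in> M - S"
      then have "e \<subseteq> A" "card e = 2" using that unfolding matchings_def edges_def by auto
      moreover have "e \<inter> \<Union>S = {}"
      proof -
        have d: "\<forall>e\<in>M. \<forall>f\<in>M. e \<noteq> f \<longrightarrow> e \<inter> f = {}" using that(1) unfolding matchings_def by simp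
        have "e \<inter> f = {}" if "f \<in> S" for f
        proof -
          have "f \<in> M" "f \<noteq> e" using that \<open>S \<subseteq> M\<close> e by auto
          then show ?thesis using d e by blast
        qed
        then show ?thesis by blast
      qed
      ultimately show "e \<in> edges (A - \<Union>S)" unfolding edges_def by blast
    qed
    then show ?thesis using that unfolding matchings_def by blast
  qed
  have "bij_betw (\<lambda>R. S \<union> R) ?X ?Y"
  proof (rule bij_betw_byWitness[where f'="\<lambda>M. M - S"])
    show "\<forall>a\<in>?X. S \<union> a - S = a" using disj by blast
    show "\<forall>a\<in>?Y. S \<union> (a - S) = a" by blast
    show "(\<lambda>R. S \<union> R) ` ?X \<subseteq> ?Y"
    proof
      fix M assume "M \<in> (\<lambda>R. S \<union> R) ` ?X"
      then obtain R where R: "R \<in> ?X" "M = S \<union> R" by blast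
      have "finite R" using R matching_finite[of "A - \<Union>S" R] fin by auto
      then have "card M = card S + card R" using R disj finS by (simp add: card_Un_disjoint)
      then show "M \<in> ?Y" using R un k by auto
    qed
    show "(\<lambda>M. M - S) ` ?Y \<subseteq> ?X"
    proof
      fix R assume "R \<in> (\<lambda>M. M - S) ` ?Y"
      then obtain M where M: "M \<in> ?Y" "R = M - S" by blast
      have "card R = card M - card S" using M finS by (simp add: card_Diff_subset)
      then show "R \<in> ?X" using M diff by auto
    qed
  qed
  then have "card ?X = card ?Y" by (rule bij_betw_same_card)
  then show ?thesis unfolding NM_def by simp
qed


lemma empty_matching: "{} \<in> matchings A" unfolding matchings_def by auto

lemma NM_zero: "finite A \<Longrightarrow> NM A 0 = 1"
proof -
  assume fin: "finite A"
  have "{M \<in> matchings A. card M = 0} = {{}}"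
    using empty_matching matching_finite[OF fin] by auto
  then show ?thesis unfolding NM_def by simp
qed

lemma matchings_empty: "matchings {} = {{}}"
  unfolding matchings_def edges_def by auto

lemma odd_mult_mod: "(Suc (2*a) * c) mod 2 = c mod (2::nat)"
proof -
  have "Suc (2*a) * c = c + 2*(a*c)" by simp
  then show ?thesis by (metis mod_mult_self2)
qed

lemma NM_split:
  assumes fin: "finite A" and x: "x \<in> A"
  shows "NM A (Suc j) = NM (A - {x}) (Suc j) + (\<Sum>y\<in>A - {x}. NM (A - {x,y}) j)"
proof -
  let ?Mj = "{M \<in> matchings A. card M = Suc j}"
  let ?P = "{M \<in> ?Mj. x \<notin> \<Union>M}"
  let ?Q = "\<lambda>y. {M \<in> matchings A. card M = Suc j \<and> {{x,y}} \<subseteq> M}"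
  have finMj: "finite ?Mj" using finite_matchings[OF fin] by simp
  have split: "?Mj = ?P \<union> (\<Union>y\<in>A - {x}. ?Q y)"
  proof
    show "?Mj \<subseteq> ?P \<union> (\<Union>y\<in>A - {x}. ?Q y)"
    proof
      fix M assume M: "M \<in> ?Mj"
      show "M \<in> ?P \<union> (\<Union>y\<in>A - {x}. ?Q y)"
      proof (cases "x \<in> \<Union>M")
        case False then show ?thesis using M by blast
      next
        case True
        then obtain e where e: "e \<in> M" "x \<in> e" by blast
        then have "card e = 2" "e \<subseteq> A" using M unfolding matchings_def edges_def by auto
        then obtain a b where ab: "e = {a,b}" "a \<noteq> b" by (meson card_2_iff)
        then obtain y where "e = {x,y}" "y \<noteq> x" using e(2) by auto
        then have "y \<in> A - {x}" "{x,y} \<in> M" using \<open>e \<subseteq> A\<close> e by auto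
        then show ?thesis using M by blast
      qed
    qed
    show "?P \<union> (\<Union>y\<in>A - {x}. ?Q y) \<subseteq> ?Mj" by blast
  qed
  have P: "?P = {M \<in> matchings (A - {x}). card M = Suc j}"
    unfolding matchings_def edges_def by blast
  have Q: "card (?Q y) = NM (A - {x,y}) j" if y: "y \<in> A - {x}" for y
  proof -
    have S: "{{x,y}} \<in> matchings A" using y x unfolding matchings_def edges_def by auto
    have "card (?Q y) = NM (A - \<Union>{{x,y}}) (Suc j - card {{x,y}})"
      by (rule ext_card[OF fin S]) simp
    then show ?thesis by simp
  qed
  have disjQ: "\<forall>y\<in>A - {x}. \<forall>z\<in>A - {x}. y \<noteq> z \<longrightarrow> ?Q y \<inter> ?Q z = {}"
  proof (intro ballI impI)
    fix y z assume yz: "y \<in> A - {x}" "z \<in> A - {x}" "y \<noteq> z"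
    { fix M assume "M \<in> ?Q y" "M \<in> ?Q z"
      then have "y = z" using matching_uniq[of M A x y z] by simp }
    then show "?Q y \<inter> ?Q z = {}" using yz(3) by blast
  qed
  have finQ: "\<forall>y\<in>A - {x}. finite (?Q y)"
  proof
    fix y show "finite (?Q y)" using finMj by (rule finite_subset[rotated]) blast
  qed
  have "card ?Mj = card (?P \<union> (\<Union>y\<in>A - {x}. ?Q y))" by (rule arg_cong[OF split])
  also have "\<dots> = card ?P + card (\<Union>y\<in>A - {x}. ?Q y)"
  proof (rule card_Un_disjoint)
    show "finite ?P" using finMj by (rule finite_subset[rotated]) blast
    show "finite (\<Union>y\<in>A - {x}. ?Q y)" using finMj by (rule finite_subset[rotated]) blast
    show "?P \<inter> (\<Union>y\<in>A - {x}. ?Q y) = {}" by blast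
  qed
  also have "card (\<Union>y\<in>A - {x}. ?Q y) = (\<Sum>y\<in>A - {x}. card (?Q y))"
    by (rule card_UN_disjoint) (use fin finQ disjQ in auto)
  also have "\<dots> = (\<Sum>y\<in>A - {x}. NM (A - {x,y}) j)" using Q by (rule sum.cong[OF refl])
  finally show ?thesis unfolding NM_def P by simp
qed

lemma NM_parity_aux:
  "finite A \<Longrightarrow> card A = n \<Longrightarrow> NM A j mod 2 = (n choose (2*j)) mod 2"
proof (induction n arbitrary: A j rule: less_induct)
  case (less n)
  show ?case
  proof (cases j)
    case 0 then show ?thesis using NM_zero[OF less.prems(1)] by simp
  next
    case (Suc j')
    show ?thesis
    proof (cases n)
      case 0
      then have "A = {}" using less.prems by simp
      moreover have "{M \<in> matchings A. card M = j} = {}" using \<open>A = {}\<close> \<open>j = Suc j'\<close> by (auto simp: matchings_empty)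
      then have "NM A j = 0" unfolding NM_def by (metis card.empty)
      then show ?thesis using Suc 0 by simp
    next
      case (Suc n')
      then obtain x where x: "x \<in> A" using less.prems by (metis card.empty ex_in_conv nat.distinct(1))
      have c1: "card (A - {x}) = n'" using less.prems x Suc by simp
      have c2: "card (A - {x,y}) = n' - 1" if "y \<in> A - {x}" for y
        using less.prems x Suc that by (simp add: card_Diff_subset) 
      have IH1: "NM (A - {x}) (Suc j') mod 2 = (n' choose (2 * Suc j')) mod 2"
        using less.IH[of n' "A - {x}"] c1 less.prems Suc by simp
      have IH2: "NM (A - {x,y}) j' mod 2 = ((n' - 1) choose (2 * j')) mod 2" if "y \<in> A - {x}" for y
        using less.IH[of "n' - 1" "A - {x,y}"] c2[OF that] less.prems Suc by simp
      have "(\<Sum>y\<in>A - {x}. NM (A - {x,y}) j') mod 2 = (\<Sum>y\<in>A - {x}. NM (A - {x,y}) j' mod 2) mod 2"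
        by (simp add: mod_sum_eq)
      also have "\<dots> = (\<Sum>y\<in>A - {x}. ((n' - 1) choose (2 * j')) mod 2) mod 2"
        using IH2 by (metis (no_types, lifting) sum.cong)
      also have "\<dots> = (n' * ((n' - 1) choose (2 * j'))) mod 2"
        by (simp add: c1 mod_mult_right_eq)
      also have "\<dots> = (Suc (2*j') * (n' choose Suc (2*j'))) mod 2"
        by (simp only: binomial_absorption)
      also have "\<dots> = (n' choose Suc (2*j')) mod 2" by (rule odd_mult_mod)
      finally have S: "(\<Sum>y\<in>A - {x}. NM (A - {x,y}) j') mod 2 = (n' choose Suc (2*j')) mod 2" .
      have "NM A j mod 2 = (NM (A - {x}) (Suc j') + (\<Sum>y\<in>A - {x}. NM (A - {x,y}) j')) mod 2"
        using NM_split[OF less.prems(1) x] \<open>j = Suc j'\<close> by simp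
      also have "\<dots> = ((n' choose (2 * Suc j')) + (n' choose Suc (2*j'))) mod 2"
        using IH1 S by (metis mod_add_eq)
      also have "(n' choose (2 * Suc j')) + (n' choose Suc (2*j')) = (n choose (2*j))"
        using Suc \<open>j = Suc j'\<close> by simp
      finally show ?thesis .
    qed
  qed
qed

lemma NM_parity: "finite A \<Longrightarrow> NM A j mod 2 = (card A choose (2*j)) mod 2"
  using NM_parity_aux by blast


lemma sum_mod2_cong:
  "(\<And>x. x \<in> X \<Longrightarrow> f x mod 2 = g x mod 2) \<Longrightarrow> sum f X mod 2 = sum g X mod (2::nat)"
proof -
  assume h: "\<And>x. x \<in> X \<Longrightarrow> f x mod 2 = g x mod 2"
  have "sum f X mod 2 = (\<Sum>x\<in>X. f x mod 2) mod 2" by (simp add: mod_sum_eq)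
  also have "(\<Sum>x\<in>X. f x mod 2) = (\<Sum>x\<in>X. g x mod 2)" by (rule sum.cong[OF refl h])
  also have "(\<Sum>x\<in>X. g x mod 2) mod 2 = sum g X mod 2" by (simp add: mod_sum_eq)
  finally show ?thesis .
qed

lemma main_count:
  assumes fin: "finite A" and m: "card A = m"
  shows "(\<Sum>i=0..k. muM A i J * binom_int (int m - 2 * int i) (2*k - 2*i)) mod 2
         = muM A k (UNIV - J) mod 2"
proof -
  let ?W = "{S \<in> matchings A. \<forall>e\<in>S. \<Sum>e \<in> J}"
  let ?Wi = "\<lambda>i. {S \<in> matchings A. card S = i \<and> (\<forall>e\<in>S. \<Sum>e \<in> J)}"
  let ?Mk = "{M \<in> matchings A. card M = k}"
  let ?E = "\<lambda>S. card {M \<in> matchings A. card M = k \<and> S \<subseteq> M}"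
  let ?X = "{S \<in> ?W. card S \<le> k}"
  let ?c = "\<lambda>M. card {e \<in> M. \<Sum>e \<in> J}"
  have finM: "finite (matchings A)" using finite_matchings[OF fin] .
  have finMk: "finite ?Mk" using finM by simp
  have finX: "finite ?X" using finM by simp
  have step1: "muM A i J * binom_int (int m - 2 * int i) (2*k - 2*i)
      = (\<Sum>S\<in>?Wi i. binom_int (int m - 2 * int i) (2*k - 2*i))" for i
    unfolding muM_def by simp
  have step2: "binom_int (int m - 2 * int i) (2*k - 2*i) mod 2 = ?E S mod 2"
    if i: "i \<in> {0..k}" and S: "S \<in> ?Wi i" for i S
  proof -
    have Sm: "S \<in> matchings A" and ci: "card S = i" using S by auto
    note uc = union_card[OF fin Sm]
    have "2 * i \<le> m" using uc m ci card_mono[OF fin uc(2)] by simp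
    then have h: "int m - 2 * int i = int (m - 2*i)" by (simp add: of_nat_diff)
    have h2: "2*k - 2*i = 2*(k - i)" by simp
    have b: "binom_int (int m - 2 * int i) (2*k - 2*i) = ((m - 2*i) choose (2*(k - i)))"
      unfolding binom_int_def h h2 by simp
    have cA: "card (A - \<Union>S) = m - 2*i" using uc m ci by (simp add: card_Diff_subset finite_subset[OF _ fin])
    have "?E S = NM (A - \<Union>S) (k - i)" using ext_card[OF fin Sm] ci i by simp
    then have "?E S mod 2 = ((m - 2*i) choose (2*(k - i))) mod 2"
      using NM_parity[of "A - \<Union>S" "k - i"] fin cA by simp
    then show ?thesis using b by simp
  qed
  have "(\<Sum>i=0..k. muM A i J * binom_int (int m - 2 * int i) (2*k - 2*i)) mod 2
      = (\<Sum>i=0..k. \<Sum>S\<in>?Wi i. binom_int (int m - 2 * int i) (2*k - 2*i)) mod 2"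
    by (simp only: step1)
  also have "\<dots> = (\<Sum>i=0..k. \<Sum>S\<in>?Wi i. ?E S) mod 2"
    apply (rule sum_mod2_cong)
    apply (rule sum_mod2_cong)
    using step2 by blast
  also have "(\<Sum>i=0..k. \<Sum>S\<in>?Wi i. ?E S) = (\<Sum>i\<in>{0..k}. sum ?E {S. S \<in> ?X \<and> card S = i})"
    apply (rule sum.cong[OF refl])
    apply (rule sum.cong)
    by auto
  also have "\<dots> = sum ?E ?X"
    by (rule sum.group) (use finX in auto)
  also have "sum ?E ?X = (\<Sum>S\<in>?X. \<Sum>M\<in>{M. M \<in> ?Mk \<and> S \<subseteq> M}. 1)"
    by (rule sum.cong) auto
  also have "\<dots> = (\<Sum>M\<in>?Mk. \<Sum>S\<in>{S. S \<in> ?X \<and> S \<subseteq> M}. 1)"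
    by (rule sum.swap_restrict[OF finX finMk])
  also have "\<dots> = (\<Sum>M\<in>?Mk. (2::nat) ^ ?c M)"
  proof (rule sum.cong[OF refl])
    fix M assume M: "M \<in> ?Mk"
    have finMM: "finite M" using matching_finite[OF fin] M by simp
    have "{S. S \<in> ?X \<and> S \<subseteq> M} = Pow {e \<in> M. \<Sum>e \<in> J}"
    proof
      show "{S. S \<in> ?X \<and> S \<subseteq> M} \<subseteq> Pow {e \<in> M. \<Sum>e \<in> J}" by auto
      show "Pow {e \<in> M. \<Sum>e \<in> J} \<subseteq> {S. S \<in> ?X \<and> S \<subseteq> M}"
      proof
        fix S assume "S \<in> Pow {e \<in> M. \<Sum>e \<in> J}"
        then have SM: "S \<subseteq> M" and SJ: "\<forall>e\<in>S. \<Sum>e \<in> J" by auto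
        have "S \<in> matchings A" using M SM unfolding matchings_def by blast
        moreover have "card S \<le> k" using card_mono[OF finMM SM] M by simp
        ultimately show "S \<in> {S. S \<in> ?X \<and> S \<subseteq> M}" using SM SJ by blast
      qed
    qed
    then show "(\<Sum>S\<in>{S. S \<in> ?X \<and> S \<subseteq> M}. 1) = (2::nat) ^ ?c M"
      using finMM by (simp add: card_Pow)
  qed
  finally have A1: "(\<Sum>i=0..k. muM A i J * binom_int (int m - 2 * int i) (2*k - 2*i)) mod 2
      = (\<Sum>M\<in>?Mk. (2::nat) ^ ?c M) mod 2" .
  also have "\<dots> = (\<Sum>M\<in>?Mk. (if ?c M = 0 then 1 else 0)) mod 2"
    by (rule sum_mod2_cong) (auto simp: power_0_left)
  also have "(\<Sum>M\<in>?Mk. (if ?c M = 0 then 1 else 0)) = card {M \<in> ?Mk. ?c M = 0}"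
    using finMk by (simp add: sum.inter_filter[symmetric])
  also have "{M \<in> ?Mk. ?c M = 0} = {M \<in> matchings A. card M = k \<and> (\<forall>e\<in>M. \<Sum>e \<in> UNIV - J)}"
  proof -
    have "?c M = 0 \<longleftrightarrow> (\<forall>e\<in>M. \<Sum>e \<in> UNIV - J)" if "M \<in> matchings A" for M
    proof -
      have "finite {e \<in> M. \<Sum>e \<in> J}" using matching_finite[OF fin that] by simp
      then show ?thesis by auto
    qed
    then show ?thesis by blast
  qed
  finally show ?thesis unfolding muM_def .
qed


lemma Pset_infinite: "infinite Pset"
  unfolding infinite_nat_iff_unbounded
proof
  fix m :: nat
  have "4*(m+1) > m" "4*(m+1) \<in> Pset" unfolding Pset_def by auto
  then show "\<exists>n>m. n \<in> Pset" by blast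
qed

lemma restr_card: "finite (restr Pset m) \<and> card (restr Pset m) = m"
proof -
  have "inj (enumerate Pset)" using inj_enumerate[OF Pset_infinite] .
  then have "inj_on (enumerate Pset) {..<m}" by (rule inj_on_subset) simp
  then show ?thesis unfolding restr_def by (simp add: card_image)
qed

theorem lemma2p4:
  fixes m k :: nat
  assumes "m \<ge> 1" and "k \<ge> 1"
  shows "(\<Sum>i=0..k. mu (restr Pset m) i Jstar * binom_int (int m - 2 * int i) (2*k - 2*i)) mod 2
         = mu (restr Pset m) k Lset mod 2"
  unfolding mu_muM Lset_def
  using main_count[where A="restr Pset m" and m=m and k=k and J=Jstar] restr_card by blast

end
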